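(* Algorithm $\mathsf{EqualCellsCounter}$ (described in the context) has audit complexity $O(n^2)$: there is an auditor which, given $F$ (on $n$ variables), the estimate $C_{est}$ and the certificate $h$ output by $\mathsf{EqualCellsCounter}(F)$, makes a single query to a $\Sigma_2^P$ oracle on a quantified Boolean formula with $O(n^2)$ variables, accepts the algorithm's output, and whenever it accepts, $C_{est}$ is within a factor $16$ of $|\mathrm{Sol}(F)|$.
   Context: $\mathrm{Sol}(F)$ is the set of satisfying assignments of $F$; $\log$ is base 2. $\mathcal{H}(n,m,n)$ is a fixed explicit $n$-wise independent family of hash functions $\{0,1\}^n\to\{0,1\}^m$, each member described by polynomially many bits. For positive integers $\ell,u$, $\varphi^{\langle F,\ell,u\rangle}_{Cells}(m)$ is $\exists h\in\mathcal{H}(n,m,n)\ \forall \alpha\in\{0,1\}^m\ \forall y_1,\dots,y_{u+1}\in\{0,1\}^n\ \exists z_1,\dots,z_\ell\in\{0,1\}^n:$ $\Big(\bigwedge_{i=1}^{u+1}(F(y_i)\wedge h(y_i)=\alpha)\rightarrow\bigvee_{1\le i<j\le u+1}(y_i=y_j)\Big)\wedge\Big(\bigwedge_{i=1}^{\ell}(F(z_i)\wedge h(z_i)=\alpha)\wedge\bigwedge_{1\le i<j\le\ell}(z_i\neq z_j)\Big).$ Algorithm $\mathsf{EqualCellsCounter}(F)$: set $u=16384n$, $\ell=1024n$; for $m=1,\dots,n$ query a $\Sigma_3^P$ oracle on $\varphi^{\langle F,\ell,u\rangle}_{Cells}(m)$; at the first $m$ for which it is true, output $C_{est}=\ell\cdot2^m$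 and the witnessing $h$ as certificate. An auditor for an algorithm $A$ takes $F$, the estimate and the certificate produced by $A$, and uses an oracle to certify that the estimate lies within the claimed approximation factor of $|\mathrm{Sol}(F)|$; $A$ has audit complexity $r$ if it has an auditor making exactly one call to a $\Sigma_2^P$ oracle, on a formula with at most $r$ variables (the paper's auditor recovers $m=\lfloor\log(C_{est}/n)\rfloor-10$ and checks $\varphi^{\langle F,\ell,u\rangle}_{Cells}(m)$ with $h$ substituted by the certificate). *)

theory Defs
  imports Complex_Main
begin

datatype pform = PVar nat | PTrue | PNot pform | PAnd pform pform | POr pform pform

fun peval :: "(nat \<Rightarrow> bool) \<Rightarrow> pform \<Rightarrow> bool" where
  "peval v (PVar i) = v i"
| "peval v PTrue = True"
| "peval v (PNot f) = (\<not> peval v f)"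
| "peval v (PAnd f g) = (peval v f \<and> peval v g)"
| "peval v (POr f g) = (peval v f \<or> peval v g)"

fun pvars :: "pform \<Rightarrow> nat set" where
  "pvars (PVar i) = {i}"
| "pvars PTrue = {}"
| "pvars (PNot f) = pvars f"
| "pvars (PAnd f g) = pvars f \<union> pvars g"
| "pvars (POr f g) = pvars f \<union> pvars g"

definition formula_on :: "nat \<Rightarrow> pform \<Rightarrow> bool" where
  "formula_on n F \<longleftrightarrow> pvars F \<subseteq> {..<n}"

definition sat :: "pform \<Rightarrow> bool list \<Rightarrow> bool" where
  "sat F x \<longleftrightarrow> peval (\<lambda>i. x ! i) F"

definition Sol :: "nat \<Rightarrow> pform \<Rightarrow> bool list set" where
  "Sol n F = {x. length x = n \<and> sat F x}"

text \<open>H is a k-wise independent family of functions {0,1}^n -> {0,1}^m: a finite nonempty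
  set of functions mapping length-n lists to length-m lists such that for a uniformly random
  member h, the values at any k distinct points are independent and uniform.\<close>
definition kwise_indep_family ::
  "nat \<Rightarrow> nat \<Rightarrow> nat \<Rightarrow> (bool list \<Rightarrow> bool list) set \<Rightarrow> bool" where
  "kwise_indep_family n m k H \<longleftrightarrow>
     finite H \<and> H \<noteq> {} \<and>
     (\<forall>h\<in>H. \<forall>x. length x = n \<longrightarrow> length (h x) = m) \<and>
     (\<forall>xs as. length xs = k \<and> distinct xs \<and> (\<forall>x\<in>set xs. length x = n) \<and>
              length as = k \<and> (\<forall>a\<in>set as. length a = m) \<longrightarrow>
        card {h\<in>H. \<forall>i<k. h (xs ! i) = as ! i} * 2 ^ (m * k) = card H)"

definition hash_families :: "(nat \<Rightarrow> nat \<Rightarrow> (bool list \<Rightarrow> bool list) set) \<Rightarrow> bool" where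
  "hash_families Hfam \<longleftrightarrow> (\<forall>n m. kwise_indep_family n m n (Hfam n m))"

definition ECC_l :: "nat \<Rightarrow> nat" where "ECC_l n = 1024 * n"
definition ECC_u :: "nat \<Rightarrow> nat" where "ECC_u n = 16384 * n"

text \<open>Matrix of phi_Cells (y_1..y_(u+1) indexed 0..u, z_1..z_l indexed 0..l-1).\<close>
definition cells_matrix ::
  "pform \<Rightarrow> nat \<Rightarrow> nat \<Rightarrow> (bool list \<Rightarrow> bool list) \<Rightarrow> bool list
    \<Rightarrow> (nat \<Rightarrow> bool list) \<Rightarrow> (nat \<Rightarrow> bool list) \<Rightarrow> bool" where
  "cells_matrix F l u h \<alpha> y z \<longleftrightarrow>
     ((\<forall>i\<le>u. sat F (y i) \<and> h (y i) = \<alpha>) \<longrightarrow> (\<exists>i j. i < j \<and> j \<le> u \<and> y i = y j)) \<and>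
     ((\<forall>i<l. sat F (z i) \<and> h (z i) = \<alpha>) \<and> (\<forall>i j. i < j \<and> j < l \<longrightarrow> z i \<noteq> z j))"

definition cells_body ::
  "nat \<Rightarrow> pform \<Rightarrow> nat \<Rightarrow> nat \<Rightarrow> nat \<Rightarrow> (bool list \<Rightarrow> bool list) \<Rightarrow> bool" where
  "cells_body n F l u m h \<longleftrightarrow>
     (\<forall>\<alpha>. length \<alpha> = m \<longrightarrow>
       (\<forall>ys. length ys = u + 1 \<and> (\<forall>y\<in>set ys. length y = n) \<longrightarrow>
         (\<exists>zs. length zs = l \<and> (\<forall>z\<in>set zs. length z = n) \<and>
            cells_matrix F l u h \<alpha> (\<lambda>i. ys ! i) (\<lambda>i. zs ! i))))"

definition phi_cells ::
  "(nat \<Rightarrow> nat \<Rightarrow> (bool list \<Rightarrow> bool list) set) \<Rightarrow> nat \<Rightarrow> pform \<Rightarrow> nat \<Rightarrow> nat \<Rightarrow> nat \<Rightarrow> bool" where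
  "phi_cells Hfam n F l u m \<longleftrightarrow> (\<exists>h\<in>Hfam n m. cells_body n F l u m h)"

text \<open>(C, h) is a possible output of EqualCellsCounter(F): m is the first value in 1..n for
  which the Sigma_3 oracle answers true, C = l * 2^m and h is a witnessing hash function.\<close>
definition ECC_output ::
  "(nat \<Rightarrow> nat \<Rightarrow> (bool list \<Rightarrow> bool list) set) \<Rightarrow> nat \<Rightarrow> pform \<Rightarrow> nat
    \<Rightarrow> (bool list \<Rightarrow> bool list) \<Rightarrow> bool" where
  "ECC_output Hfam n F C h \<longleftrightarrow>
     (\<exists>m. 1 \<le> m \<and> m \<le> n \<and>
          (\<forall>m'. 1 \<le> m' \<and> m' < m \<longrightarrow> \<not> phi_cells Hfam n F (ECC_l n) (ECC_u n) m') \<and>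
          phi_cells Hfam n F (ECC_l n) (ECC_u n) m \<and>
          C = ECC_l n * 2 ^ m \<and> h \<in> Hfam n m \<and> cells_body n F (ECC_l n) (ECC_u n) m h)"

datatype sigma2 = Sigma2 nat nat "bool list \<Rightarrow> bool list \<Rightarrow> bool"

fun s2_nvars :: "sigma2 \<Rightarrow> nat" where
  "s2_nvars (Sigma2 a b M) = a + b"

fun s2_true :: "sigma2 \<Rightarrow> bool" where
  "s2_true (Sigma2 a b M) =
     (\<forall>xs. length xs = a \<longrightarrow> (\<exists>ys. length ys = b \<and> M xs ys))"

definition chunk :: "nat \<Rightarrow> bool list \<Rightarrow> nat \<Rightarrow> bool list" where
  "chunk n xs i = take n (drop (i * n) xs)"

definition audit_mi :: "nat \<Rightarrow> nat \<Rightarrow> int" where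
  "audit_mi n C = \<lfloor>log 2 (real C / real n)\<rfloor> - 10"

definition audit_m :: "nat \<Rightarrow> nat \<Rightarrow> nat" where
  "audit_m n C = nat (min (int n) (audit_mi n C))"

text \<open>The single Sigma_2 query: phi_Cells(m) with h substituted by the certificate; universal
  variables alpha (m bits), y_1..y_(u+1) (n bits each); existential z_1..z_l (n bits each).\<close>
definition audit_query ::
  "nat \<Rightarrow> pform \<Rightarrow> nat \<Rightarrow> (bool list \<Rightarrow> bool list) \<Rightarrow> sigma2" where
  "audit_query n F C h =
     (let m = audit_m n C; l = ECC_l n; u = ECC_u n in
      Sigma2 (m + (u + 1) * n) (l * n)
        (\<lambda>xs zs. cells_matrix F l u h (take m xs) (chunk n (drop m xs)) (chunk n zs)))"

definition audit_accepts ::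
  "(nat \<Rightarrow> nat \<Rightarrow> (bool list \<Rightarrow> bool list) set) \<Rightarrow> nat \<Rightarrow> pform \<Rightarrow> nat
    \<Rightarrow> (bool list \<Rightarrow> bool list) \<Rightarrow> bool" where
  "audit_accepts Hfam n F C h \<longleftrightarrow>
     0 < C \<and> 0 \<le> audit_mi n C \<and> audit_mi n C \<le> int n \<and>
     h \<in> Hfam n (nat (audit_mi n C)) \<and> s2_true (audit_query n F C h)"

end

theory Submission imports Defs begin

lemma chunk_concat:
  "(\<forall>y\<in>set ys. length y = n) \<Longrightarrow> i < length ys \<Longrightarrow> chunk n (concat ys) i = ys ! i"
proof (induction ys arbitrary: i)
  case Nil then show ?case by simp
next
  case (Cons y ys)
  show ?case
  proof (cases i)
    case 0 then show ?thesis using Cons by (simp add: chunk_def)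
  next
    case (Suc j)
    have "chunk n (concat (y#ys)) i = chunk n (concat ys) j"
      using Cons.prems Suc by (simp add: chunk_def add.commute)
    then show ?thesis using Cons Suc by simp
  qed
qed

lemma length_chunk: "(i+1)*n \<le> length xs \<Longrightarrow> length (chunk n xs i) = n"
  by (simp add: chunk_def)

lemma length_concat_const: "(\<forall>y\<in>set ys. length y = n) \<Longrightarrow> length (concat ys) = length ys * n"
  by (induction ys) auto

lemma cells_matrix_cong:
  assumes "\<And>i. i \<le> u \<Longrightarrow> y i = y' i" "\<And>i. i < l \<Longrightarrow> z i = z' i"
  shows "cells_matrix F l u h \<alpha> y z = cells_matrix F l u h \<alpha> y' z'"
proof -
  have a: "(\<forall>i\<le>u. sat F (y i) \<and> h (y i) = \<alpha>) = (\<forall>i\<le>u. sat F (y' i) \<and> h (y' i) = \<alpha>)"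
    using assms(1) by auto
  have b: "(\<exists>i j. i < j \<and> j \<le> u \<and> y i = y j) = (\<exists>i j. i < j \<and> j \<le> u \<and> y' i = y' j)"
  proof
    assume "\<exists>i j. i < j \<and> j \<le> u \<and> y i = y j"
    then obtain i j where "i < j" "j \<le> u" "y i = y j" by blast
    then show "\<exists>i j. i < j \<and> j \<le> u \<and> y' i = y' j" using assms(1)[of i] assms(1)[of j] by auto
  next
    assume "\<exists>i j. i < j \<and> j \<le> u \<and> y' i = y' j"
    then obtain i j where "i < j" "j \<le> u" "y' i = y' j" by blast
    moreover have "y i = y j" using calculation assms(1)[of i] assms(1)[of j] by auto
    ultimately show "\<exists>i j. i < j \<and> j \<le> u \<and> y i = y j" by blast
  qed
  have c: "(\<forall>i<l. sat F (z i) \<and> h (z i) = \<alpha>) = (\<forall>i<l. sat F (z' i) \<and> h (z' i) = \<alpha>)"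
    using assms(2) by auto
  have d: "(\<forall>i j. i < j \<and> j < l \<longrightarrow> z i \<noteq> z j) = (\<forall>i j. i < j \<and> j < l \<longrightarrow> z' i \<noteq> z' j)"
    using assms(2) by (metis (no_types, lifting) order.strict_trans)
  show ?thesis unfolding cells_matrix_def using a b c d by simp
qed

lemma audit_mi_exact: "1 \<le> n \<Longrightarrow> audit_mi n (1024 * n * 2 ^ m) = int m"
proof -
  assume n: "1 \<le> n"
  have "real (1024 * n * 2 ^ m) / real n = 2 ^ (m + 10)" using n by (simp add: power_add)
  then have "log 2 (real (1024 * n * 2 ^ m) / real n) = real (m + 10)" by simp
  then show ?thesis unfolding audit_mi_def by simp
qed


lemma fin_bool_lists: "finite {x::bool list. length x = n}"
  using finite_lists_length_eq[of "UNIV::bool set" n] by simp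

lemma card_bool_lists: "card {x::bool list. length x = n} = 2 ^ n"
  using card_lists_length_eq[of "UNIV::bool set" n] by simp

lemma cell_bounds:
  assumes S2: "s2_true (Sigma2 (m + (u+1)*n) (l*n)
        (\<lambda>xs zs. cells_matrix F l u h (take m xs) (chunk n (drop m xs)) (chunk n zs)))"
    and \<alpha>: "length \<alpha> = m"
  shows "l \<le> card {x\<in>Sol n F. h x = \<alpha>} \<and> card {x\<in>Sol n F. h x = \<alpha>} \<le> u"
proof -
  define cell where "cell = {x\<in>Sol n F. h x = \<alpha>}"
  have S2': "\<And>xs. length xs = m + (u+1)*n \<Longrightarrow> \<exists>zs. length zs = l*n \<and>
     cells_matrix F l u h (take m xs) (chunk n (drop m xs)) (chunk n zs)"
    using S2 by simp
  have fin: "finite cell"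
    by (rule finite_subset[OF _ fin_bool_lists[of n]]) (auto simp: cell_def Sol_def)
  have up: "card cell \<le> u"
  proof (rule ccontr)
    assume "\<not> card cell \<le> u"
    then have "u + 1 \<le> card cell" by simp
    then obtain T where T: "T \<subseteq> cell" "card T = u+1" "finite T"
      by (rule obtain_subset_with_card_n)
    obtain ys where ys: "set ys = T" "distinct ys" using finite_distinct_list[OF T(3)] by blast
    have lys: "length ys = u+1" using ys T distinct_card by metis
    have ysn: "\<forall>y\<in>set ys. length y = n" using ys T by (auto simp: cell_def Sol_def)
    define xs where "xs = \<alpha> @ concat ys"
    have "length xs = m + (u+1)*n" using \<alpha> lys length_concat_const[OF ysn] by (simp add: xs_def)
    then obtain zs where zs: "cells_matrix F l u h (take m xs) (chunk n (drop m xs)) (chunk n zs)"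
      using S2' by blast
    have tk: "take m xs = \<alpha>" "drop m xs = concat ys" using \<alpha> by (auto simp: xs_def)
    have "cells_matrix F l u h \<alpha> (\<lambda>i. ys ! i) (chunk n zs)"
      using zs unfolding tk
      by (subst cells_matrix_cong[where y' = "chunk n (concat ys)" and z' = "chunk n zs"])
         (auto simp: chunk_concat[OF ysn] lys)
    moreover have "\<forall>i\<le>u. sat F (ys ! i) \<and> h (ys ! i) = \<alpha>"
    proof (intro allI impI)
      fix i assume "i \<le> u"
      then have "ys ! i \<in> cell" using ys T lys by (metis nth_mem le_imp_less_Suc Suc_eq_plus1 subsetD)
      then show "sat F (ys ! i) \<and> h (ys ! i) = \<alpha>" by (auto simp: cell_def Sol_def)
    qed
    ultimately obtain i j where "i < j" "j \<le> u" "ys ! i = ys ! j"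
      unfolding cells_matrix_def by blast
    then show False using ys(2) lys nth_eq_iff_index_eq by fastforce
  qed
  have lo: "l \<le> card cell"
  proof -
    define xs where "xs = \<alpha> @ replicate ((u+1)*n) False"
    have "length xs = m + (u+1)*n" using \<alpha> by (simp add: xs_def)
    then obtain zs where zs: "length zs = l*n"
      "cells_matrix F l u h (take m xs) (chunk n (drop m xs)) (chunk n zs)"
      using S2' by blast
    have tk: "take m xs = \<alpha>" using \<alpha> by (simp add: xs_def)
    have A: "\<forall>i<l. sat F (chunk n zs i) \<and> h (chunk n zs i) = \<alpha>"
      and B: "\<forall>i j. i < j \<and> j < l \<longrightarrow> chunk n zs i \<noteq> chunk n zs j"
      using zs(2) unfolding tk cells_matrix_def by blast+
    have sub: "chunk n zs ` {..<l} \<subseteq> cell"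
    proof
      fix z assume "z \<in> chunk n zs ` {..<l}"
      then obtain i where i: "i < l" "z = chunk n zs i" by blast
      have "(i+1)*n \<le> length zs" using i zs(1) mult_le_mono1[of "i+1" l n] by simp
      then have "length z = n" using i length_chunk by simp
      then show "z \<in> cell" using A i by (auto simp: cell_def Sol_def)
    qed
    have inj: "inj_on (chunk n zs) {..<l}"
    proof (rule inj_onI)
      fix i j assume "i \<in> {..<l}" "j \<in> {..<l}" "chunk n zs i = chunk n zs j"
      then show "i = j" using B by (metis lessThan_iff linorder_neqE_nat)
    qed
    have "card (chunk n zs ` {..<l}) = l" using card_image[OF inj] by simp
    then show ?thesis using card_mono[OF fin sub] by simp
  qed
  show ?thesis using up lo by (simp add: cell_def)
qed

lemma sol_bounds:
  assumes S2: "s2_true (Sigma2 (m + (u+1)*n) (l*n)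
        (\<lambda>xs zs. cells_matrix F l u h (take m xs) (chunk n (drop m xs)) (chunk n zs)))"
    and hlen: "\<forall>x. length x = n \<longrightarrow> length (h x) = m"
  shows "2 ^ m * l \<le> card (Sol n F) \<and> card (Sol n F) \<le> 2 ^ m * u"
proof -
  define I where "I = {\<alpha>::bool list. length \<alpha> = m}"
  define cell where "cell \<alpha> = {x\<in>Sol n F. h x = \<alpha>}" for \<alpha>
  have U: "Sol n F = (\<Union>\<alpha>\<in>I. cell \<alpha>)"
    using hlen by (auto simp: I_def cell_def Sol_def)
  have finc: "\<forall>\<alpha>\<in>I. finite (cell \<alpha>)"
  proof
    fix \<alpha> show "finite (cell \<alpha>)"
      by (rule finite_subset[OF _ fin_bool_lists[of n]]) (auto simp: cell_def Sol_def)
  qed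
  have C: "card (Sol n F) = (\<Sum>\<alpha>\<in>I. card (cell \<alpha>))"
  proof -
    have "finite I" by (simp add: I_def fin_bool_lists)
    moreover have "\<forall>i\<in>I. \<forall>j\<in>I. i \<noteq> j \<longrightarrow> cell i \<inter> cell j = {}"
      by (auto simp: cell_def)
    ultimately show ?thesis unfolding U using card_UN_disjoint finc by blast
  qed
  have cI: "card I = 2 ^ m" using card_bool_lists by (simp add: I_def)
  have b: "\<And>\<alpha>. \<alpha> \<in> I \<Longrightarrow> l \<le> card (cell \<alpha>) \<and> card (cell \<alpha>) \<le> u"
    unfolding cell_def I_def using cell_bounds[OF S2] by blast
  have "(\<Sum>\<alpha>\<in>I. card (cell \<alpha>)) \<le> of_nat (card I) * u"
    by (rule sum_bounded_above) (use b in blast)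
  moreover have "of_nat (card I) * l \<le> (\<Sum>\<alpha>\<in>I. card (cell \<alpha>))"
    by (rule sum_bounded_below) (use b in blast)
  ultimately show ?thesis using C cI by simp
qed

theorem corollary4p3:
  fixes Hfam :: "nat \<Rightarrow> nat \<Rightarrow> (bool list \<Rightarrow> bool list) set"
  assumes "hash_families Hfam"
  shows "\<exists>c::nat. \<forall>n F C h. 1 \<le> n \<longrightarrow> formula_on n F \<longrightarrow>
           s2_nvars (audit_query n F C h) \<le> c * n ^ 2 \<and>
           (ECC_output Hfam n F C h \<longrightarrow> audit_accepts Hfam n F C h) \<and>
           (audit_accepts Hfam n F C h \<longrightarrow>
              real (card (Sol n F)) / 16 \<le> real C \<and> real C \<le> 16 * real (card (Sol n F)))"
proof (intro exI[of _ 20000] allI impI conjI)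
  fix n F C h
  assume n: "1 \<le> n" and "formula_on n F"
  have hl: "\<And>m x. length x = n \<Longrightarrow> h \<in> Hfam n m \<Longrightarrow> length (h x) = m"
    using assms unfolding hash_families_def kwise_indep_family_def by blast
  have am: "audit_m n C \<le> n" by (simp add: audit_m_def)
  have "s2_nvars (audit_query n F C h) = audit_m n C + (16384*n + 1)*n + 1024*n*n"
    by (simp add: audit_query_def Let_def ECC_l_def ECC_u_def)
  also have "\<dots> \<le> n*n + (16384*n + n)*n + 1024*n*n"
    using am n le_trans[OF am le_square[of n]] by (intro add_mono mult_le_mono1) auto
  also have "\<dots> \<le> 20000 * n^2" by (simp add: power2_eq_square algebra_simps)
  finally show "s2_nvars (audit_query n F C h) \<le> 20000 * n^2" .
next
  fix n F C h
  assume n: "1 \<le> n" and "formula_on n F" and E: "ECC_output Hfam n F C h"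
  then obtain m where m: "1 \<le> m" "m \<le> n" "C = ECC_l n * 2 ^ m" "h \<in> Hfam n m"
     "cells_body n F (ECC_l n) (ECC_u n) m h"
    unfolding ECC_output_def by blast
  have mi: "audit_mi n C = int m" using m(3) audit_mi_exact[OF n] by (simp add: ECC_l_def)
  have amm: "audit_m n C = m" using mi m(2) by (simp add: audit_m_def)
  have S: "s2_true (audit_query n F C h)"
    unfolding audit_query_def Let_def amm s2_true.simps
  proof (intro allI impI)
    fix xs :: "bool list" assume lx: "length xs = m + (ECC_u n + 1) * n"
    define ys where "ys = map (chunk n (drop m xs)) [0..<ECC_u n + 1]"
    have ly: "length ys = ECC_u n + 1" by (simp add: ys_def)
    have yn: "\<forall>y\<in>set ys. length y = n"
    proof
      fix y assume "y \<in> set ys"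
      then obtain i where i: "i < ECC_u n + 1" "y = chunk n (drop m xs) i"
        unfolding ys_def set_map set_upt atLeastLessThan_iff by auto
      have "(i+1)*n \<le> length (drop m xs)" using lx i mult_le_mono1[of "i+1" "ECC_u n + 1" n] by simp
      then show "length y = n" using i length_chunk by simp
    qed
    have "length (take m xs) = m" using lx by simp
    then obtain zs where zs: "length zs = ECC_l n" "\<forall>z\<in>set zs. length z = n"
      "cells_matrix F (ECC_l n) (ECC_u n) h (take m xs) (\<lambda>i. ys ! i) (\<lambda>i. zs ! i)"
      using m(5) ly yn unfolding cells_body_def by blast
    show "\<exists>zs'. length zs' = ECC_l n * n \<and>
       cells_matrix F (ECC_l n) (ECC_u n) h (take m xs) (chunk n (drop m xs)) (chunk n zs')"
    proof (intro exI conjI)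
      show "length (concat zs) = ECC_l n * n" using length_concat_const[OF zs(2)] zs(1) by simp
      show "cells_matrix F (ECC_l n) (ECC_u n) h (take m xs) (chunk n (drop m xs)) (chunk n (concat zs))"
        using zs(3)
        by (subst cells_matrix_cong[where y' = "\<lambda>i. ys ! i" and z' = "\<lambda>i. zs ! i"])
           (auto simp: ys_def chunk_concat[OF zs(2)] zs(1) simp del: upt_Suc)
    qed
  qed
  show "audit_accepts Hfam n F C h"
    unfolding audit_accepts_def using mi m S n by (simp add: ECC_l_def)
next
  fix n F C h
  assume n: "1 \<le> n" and "formula_on n F" and A: "audit_accepts Hfam n F C h"
  define k where "k = nat (audit_mi n C)"
  have C0: "0 < C" and k0: "audit_mi n C = int k" and kn: "k \<le> n" and hk: "h \<in> Hfam n k"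
    and S: "s2_true (audit_query n F C h)"
    using A unfolding audit_accepts_def k_def by auto
  have amk: "audit_m n C = k" using k0 kn by (simp add: audit_m_def)
  have hlen: "\<forall>x. length x = n \<longrightarrow> length (h x) = k"
    using assms hk unfolding hash_families_def kwise_indep_family_def by blast
  have SB: "2 ^ k * ECC_l n \<le> card (Sol n F) \<and> card (Sol n F) \<le> 2 ^ k * ECC_u n"
    by (rule sol_bounds[OF _ hlen]) (use S in \<open>simp add: audit_query_def Let_def amk\<close>)
  have fl: "\<lfloor>log 2 (real C / real n)\<rfloor> = int (k + 10)" using k0 by (simp add: audit_mi_def)
  have pos: "real C / real n > 0" using C0 n by simp
  have "2 powr real_of_int (int (k+10)) \<le> real C / real n \<and> real C / real n < 2 powr (real_of_int (int (k+10)) + 1)"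
    using fl floor_log_eq_powr_iff[OF pos, of 2] by simp
  moreover have "2 powr real_of_int (int (k+10)) = 2 ^ (k+10)"
    using powr_realpow[of 2 "k+10"] by simp
  moreover have "2 powr (real_of_int (int (k+10)) + 1) = 2 ^ (k+11)"
    using powr_realpow[of 2 "k+11"] by (simp add: add.commute)
  ultimately have "2 ^ (k+10) \<le> real C / real n" "real C / real n < 2 ^ (k+11)" by auto
  then have c1: "2 ^ (k+10) * real n \<le> real C" "real C < 2 ^ (k+11) * real n"
    using n by (auto simp: field_simps)
  have s1: "2 ^ k * (1024 * real n) \<le> real (card (Sol n F))"
    "real (card (Sol n F)) \<le> 2 ^ k * (16384 * real n)"
  proof -
    have a: "2 ^ k * (1024 * n) \<le> card (Sol n F)" "card (Sol n F) \<le> 2 ^ k * (16384 * n)"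
      using SB unfolding ECC_l_def ECC_u_def by auto
    show "2 ^ k * (1024 * real n) \<le> real (card (Sol n F))"
      using of_nat_mono[OF a(1), where 'a=real] by simp
    show "real (card (Sol n F)) \<le> 2 ^ k * (16384 * real n)"
      using of_nat_mono[OF a(2), where 'a=real] by simp
  qed
  have e1: "(2::real) ^ (k+10) = 2^k * 1024" "(2::real) ^ (k+11) = 2^k * 2048"
    by (simp_all add: power_add)
  show "real (card (Sol n F)) / 16 \<le> real C" using c1 s1 e1 by simp
  show "real C \<le> 16 * real (card (Sol n F))" using c1 s1 e1 by simp
qed

end
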